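(* Let $K\subseteq\mathbb{C}$ be a field, $e\ge2$, and $f,g:\mathbb{Z}/e\mathbb{Z}\to\mathbb{C}$. Assume there exist $A=[a_{i,j}]$, $B=[b_{i,j}]\in M_e(K)$ (indices modulo $e$; write $A[i,j]=a_{i,j}$) such that for all $i,j$, \[ f(i)f(j)=\sum_{k=0}^{e-1}a_{j-i,k-i}f(k)\quad\text{and}\quad g(i)g(j)=\sum_{k=0}^{e-1}b_{j-i,k-i}g(k). \] Then for every $d\in(\mathbb{Z}/e\mathbb{Z})\setminus\{0\}$ and all $i,j$, \[ (f\overset{d}{\ast}g)(i)\,(f\overset{d}{\ast}g)(j)=\sum_{k=0}^{e-1}(A\overset{d}{\ast}B)[j-i,k-i]\,(f\overset{d}{\ast}g)(k). \] In particular, for every $n\ge1$ and all $i,j$, $f^{(n)}(i)f^{(n)}(j)=\sum_{k=0}^{e-1}A^{(n)}[j-i,k-i]\,f^{(n)}(k)$.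
   Context: For functions $f,g:\mathbb{Z}/e\mathbb{Z}\to\mathbb{C}$ and $d\in(\mathbb{Z}/e\mathbb{Z})\setminus\{0\}$, $(f\overset{d}{\ast}g)(i)=\sum_{s=0}^{e-1}f(s)g(ds+i)$; $f^{(n)}$ is the $n$-fold product $f\overset{-1}{\ast}\cdots\overset{-1}{\ast}f$, i.e. $f^{(n)}(i)=\sum_{k_1+\cdots+k_n\equiv i\ (\mathrm{mod}\ e)}f(k_1)\cdots f(k_n)$. For matrices $A=[a_{i,j}],B=[b_{i,j}]\in M_e(K)$, $A\overset{d}{\ast}B=\big[\sum_{s,t=0}^{e-1}a_{s,t}b_{ds+i,dt+j}\big]_{0\le i,j\le e-1}$, and $A^{(n)}=A\overset{-1}{\ast}\cdots\overset{-1}{\ast}A$ ($n$ factors; the $(-1)$-composition is associative). *)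

theory Defs
  imports Complex_Main
begin

text \<open>Z/eZ is modelled by integers taken modulo e; a function Z/eZ -> C is a function
  int => complex used only on representatives 0..e-1 (arguments are reduced mod e).
  An e x e matrix is a function int => int => complex, entries used on 0..e-1.\<close>

definition is_subfield :: "complex set \<Rightarrow> bool" where
  "is_subfield K \<longleftrightarrow> 0 \<in> K \<and> 1 \<in> K \<and>
     (\<forall>x\<in>K. \<forall>y\<in>K. x + y \<in> K \<and> x * y \<in> K) \<and>
     (\<forall>x\<in>K. - x \<in> K) \<and> (\<forall>x\<in>K. x \<noteq> 0 \<longrightarrow> inverse x \<in> K)"

definition dconv :: "int \<Rightarrow> int \<Rightarrow> (int \<Rightarrow> complex) \<Rightarrow> (int \<Rightarrow> complex) \<Rightarrow> int \<Rightarrow> complex" where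
  "dconv e d f g i = (\<Sum>s\<in>{0..<e}. f s * g ((d * s + i) mod e))"

definition mconv :: "int \<Rightarrow> int \<Rightarrow> (int \<Rightarrow> int \<Rightarrow> complex) \<Rightarrow> (int \<Rightarrow> int \<Rightarrow> complex)
    \<Rightarrow> int \<Rightarrow> int \<Rightarrow> complex" where
  "mconv e d A B i j = (\<Sum>s\<in>{0..<e}. \<Sum>t\<in>{0..<e}. A s t * B ((d * s + i) mod e) ((d * t + j) mod e))"

definition fpow :: "int \<Rightarrow> (int \<Rightarrow> complex) \<Rightarrow> nat \<Rightarrow> int \<Rightarrow> complex" where
  "fpow e f n = ((\<lambda>h. dconv e (-1) h f) ^^ (n - 1)) (\<lambda>i. f (i mod e))"

definition mpow :: "int \<Rightarrow> (int \<Rightarrow> int \<Rightarrow> complex) \<Rightarrow> nat \<Rightarrow> int \<Rightarrow> int \<Rightarrow> complex" where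
  "mpow e A n = ((\<lambda>H. mconv e (-1) H A) ^^ (n - 1)) (\<lambda>i j. A (i mod e) (j mod e))"

end

theory Submission imports Defs begin

lemma shift_sum:
  fixes e c :: int and \<phi> :: "int \<Rightarrow> 'a::comm_monoid_add"
  assumes "e > 0"
  shows "(\<Sum>x\<in>{0..<e}. \<phi> x) = (\<Sum>x\<in>{0..<e}. \<phi> ((x + c) mod e))"
proof -
  have "bij_betw (\<lambda>x. (x + c) mod e) {0..<e} {0..<e}"
  proof (rule bij_betw_imageI)
    show "inj_on (\<lambda>x. (x + c) mod e) {0..<e}"
    proof (rule inj_onI)
      fix x y assume x: "x \<in> {0..<e}" and y: "y \<in> {0..<e}" and h: "(x + c) mod e = (y + c) mod e"
      hence "x mod e = y mod e" by (metis add_diff_cancel_right' mod_diff_left_eq)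
      thus "x = y" using x y by simp
    qed
    show "(\<lambda>x. (x + c) mod e) ` {0..<e} = {0..<e}"
    proof
      show "(\<lambda>x. (x + c) mod e) ` {0..<e} \<subseteq> {0..<e}" using assms by auto
      show "{0..<e} \<subseteq> (\<lambda>x. (x + c) mod e) ` {0..<e}"
      proof
        fix y assume y: "y \<in> {0..<e}"
        have "y = ((y - c) mod e + c) mod e" using y by (simp add: mod_add_left_eq)
        moreover have "(y - c) mod e \<in> {0..<e}" using assms by simp
        ultimately show "y \<in> (\<lambda>x. (x + c) mod e) ` {0..<e}" by blast
      qed
    qed
  qed
  thus ?thesis by (rule sum.reindex_bij_betw[symmetric])
qed

lemma modmul: "(a + d * (x mod e)) mod (e::int) = (a + d * x) mod e"
  by (metis mod_add_right_eq mod_mult_right_eq)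

lemma modA: "((m + d*u) mod e - (d*((u + -k) mod e)+i)) mod (e::int) = (d*k + (m-i) mod e) mod e"
proof -
  have "((m + d*u) mod e - (d*((u + -k) mod e)+i)) mod (e::int) = ((m + d*u - i) + (-d)*((u + -k) mod e)) mod e"
    by (simp add: mod_simps algebra_simps)
  also have "\<dots> = ((m + d*u - i) + (-d)*(u + -k)) mod e" by (rule modmul)
  also have "\<dots> = (d*k + (m-i) mod e) mod e" by (simp add: mod_simps algebra_simps)
  finally show ?thesis .
qed

lemma modB: "(d*((t+s) mod e)+j-(d*s+i)) mod (e::int) = (d*t + (j-i) mod e) mod e"
proof -
  have "(d*((t+s) mod e)+j-(d*s+i)) mod (e::int) = ((j-d*s-i) + d*((t+s) mod e)) mod e" by (simp add: algebra_simps)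
  also have "\<dots> = ((j-d*s-i) + d*(t+s)) mod e" by (rule modmul)
  also have "\<dots> = (d*t + (j-i) mod e) mod e" by (simp add: mod_simps algebra_simps)
  finally show ?thesis .
qed

lemma main:
  fixes e d :: int and f g :: "int \<Rightarrow> complex" and A B :: "int \<Rightarrow> int \<Rightarrow> complex"
  assumes e: "e > 0"
    and hf: "\<forall>i\<in>{0..<e}. \<forall>j\<in>{0..<e}.
               f i * f j = (\<Sum>k\<in>{0..<e}. A ((j - i) mod e) ((k - i) mod e) * f k)"
    and hg: "\<forall>i\<in>{0..<e}. \<forall>j\<in>{0..<e}.
               g i * g j = (\<Sum>k\<in>{0..<e}. B ((j - i) mod e) ((k - i) mod e) * g k)"
    and i: "i \<in> {0..<e}" and j: "j \<in> {0..<e}"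
  shows "dconv e d f g i * dconv e d f g j =
            (\<Sum>k\<in>{0..<e}. mconv e d A B ((j - i) mod e) ((k - i) mod e) * dconv e d f g k)"
proof -
  let ?E = "{0..<e}"
  have "dconv e d f g i * dconv e d f g j =
     (\<Sum>s\<in>?E. \<Sum>t\<in>?E. (f s * f t) * (g ((d*s+i) mod e) * g ((d*t+j) mod e)))"
    unfolding dconv_def sum_product by (simp add: mult_ac)
  also have "\<dots> = (\<Sum>s\<in>?E. \<Sum>t\<in>?E. (\<Sum>k\<in>?E. A ((t-s) mod e) ((k-s) mod e) * f k) *
       (\<Sum>l\<in>?E. B ((d*t+j-(d*s+i)) mod e) ((l-(d*s+i)) mod e) * g l))"
  proof (intro sum.cong refl)
    fix s t assume s: "s \<in> ?E" and t: "t \<in> ?E"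
    have "g ((d*s+i) mod e) * g ((d*t+j) mod e) = (\<Sum>l\<in>?E. B (((d*t+j) mod e - (d*s+i) mod e) mod e) ((l - (d*s+i) mod e) mod e) * g l)"
      using hg e by simp
    also have "\<dots> = (\<Sum>l\<in>?E. B ((d*t+j-(d*s+i)) mod e) ((l-(d*s+i)) mod e) * g l)"
      by (simp add: mod_simps)
    finally show "(f s * f t) * (g ((d*s+i) mod e) * g ((d*t+j) mod e)) = (\<Sum>k\<in>?E. A ((t-s) mod e) ((k-s) mod e) * f k) *
       (\<Sum>l\<in>?E. B ((d*t+j-(d*s+i)) mod e) ((l-(d*s+i)) mod e) * g l)"
      using hf s t by simp
  qed
  also have "\<dots> = (\<Sum>s\<in>?E. \<Sum>t\<in>?E. \<Sum>k\<in>?E. \<Sum>l\<in>?E. A ((t-s) mod e) ((k-s) mod e) *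
       B ((d*t+j-(d*s+i)) mod e) ((l-(d*s+i)) mod e) * (f k * g l))"
    by (simp add: sum_product mult_ac)
  also have "\<dots> = (\<Sum>s\<in>?E. \<Sum>t\<in>?E. \<Sum>k\<in>?E. \<Sum>l\<in>?E. A t k *
       B ((d*t + (j-i) mod e) mod e) ((l-(d*s+i)) mod e) * (f ((k+s) mod e) * g l))"
  proof (rule sum.cong[OF refl])
    fix s assume s: "s \<in> ?E"
    show "(\<Sum>t\<in>?E. \<Sum>k\<in>?E. \<Sum>l\<in>?E. A ((t-s) mod e) ((k-s) mod e) *
       B ((d*t+j-(d*s+i)) mod e) ((l-(d*s+i)) mod e) * (f k * g l)) =
      (\<Sum>t\<in>?E. \<Sum>k\<in>?E. \<Sum>l\<in>?E. A t k *
       B ((d*t + (j-i) mod e) mod e) ((l-(d*s+i)) mod e) * (f ((k+s) mod e) * g l))"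
      apply (rule trans[OF shift_sum[OF e, where c = s]])
      apply (rule sum.cong[OF refl])
      apply (rule trans[OF shift_sum[OF e, where c = s]])
      apply (rule sum.cong[OF refl])
      apply (rule sum.cong[OF refl])
      apply (simp add: modB mod_simps)
      done
  qed
  also have "\<dots> = (\<Sum>t\<in>?E. \<Sum>k\<in>?E. \<Sum>s\<in>?E. \<Sum>l\<in>?E. A t k *
       B ((d*t + (j-i) mod e) mod e) ((l-(d*s+i)) mod e) * (f ((k+s) mod e) * g l))"
    apply (rule trans[OF sum.swap])
    apply (rule sum.cong[OF refl])
    apply (rule sum.swap)
    done
  also have "\<dots> = (\<Sum>t\<in>?E. \<Sum>k\<in>?E. \<Sum>u\<in>?E. \<Sum>m\<in>?E. A t k *
       B ((d*t + (j-i) mod e) mod e) ((d*k + (m-i) mod e) mod e) * (f u * g ((d*u+m) mod e)))"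
  proof (rule sum.cong[OF refl], rule sum.cong[OF refl])
    fix t k assume t: "t \<in> ?E" and k: "k \<in> ?E"
    show "(\<Sum>s\<in>?E. \<Sum>l\<in>?E. A t k *
       B ((d*t + (j-i) mod e) mod e) ((l-(d*s+i)) mod e) * (f ((k+s) mod e) * g l)) =
      (\<Sum>u\<in>?E. \<Sum>m\<in>?E. A t k *
       B ((d*t + (j-i) mod e) mod e) ((d*k + (m-i) mod e) mod e) * (f u * g ((d*u+m) mod e)))"
      apply (rule trans[OF shift_sum[OF e, where c = "-k"]])
      apply (rule sum.cong[OF refl])
      subgoal for u
      apply (rule trans[OF shift_sum[OF e, where c = "d*u"]])
      apply (rule sum.cong[OF refl])
      apply (subst modA)
      apply (simp add: mod_simps add.commute)
      done
      done
  qed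
  also have "\<dots> = (\<Sum>t\<in>?E. \<Sum>k\<in>?E. \<Sum>m\<in>?E. \<Sum>u\<in>?E. A t k *
       B ((d*t + (j-i) mod e) mod e) ((d*k + (m-i) mod e) mod e) * (f u * g ((d*u+m) mod e)))"
    by (rule sum.cong[OF refl], rule sum.cong[OF refl], rule sum.swap)
  also have "\<dots> = (\<Sum>t\<in>?E. \<Sum>m\<in>?E. \<Sum>k\<in>?E. \<Sum>u\<in>?E. A t k *
       B ((d*t + (j-i) mod e) mod e) ((d*k + (m-i) mod e) mod e) * (f u * g ((d*u+m) mod e)))"
    by (rule sum.cong[OF refl], rule sum.swap)
  also have "\<dots> = (\<Sum>m\<in>?E. \<Sum>t\<in>?E. \<Sum>k\<in>?E. \<Sum>u\<in>?E. A t k *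
       B ((d*t + (j-i) mod e) mod e) ((d*k + (m-i) mod e) mod e) * (f u * g ((d*u+m) mod e)))"
    by (rule sum.swap)
  also have "\<dots> = (\<Sum>m\<in>?E. mconv e d A B ((j - i) mod e) ((m - i) mod e) * dconv e d f g m)"
    unfolding mconv_def dconv_def by (simp add: sum_distrib_left sum_distrib_right mult_ac)
  finally show ?thesis .
qed

lemma fpow_Suc: "n \<ge> 1 \<Longrightarrow> fpow e f (Suc n) = dconv e (-1) (fpow e f n) f"
  unfolding fpow_def by (cases n) auto

lemma mpow_Suc: "n \<ge> 1 \<Longrightarrow> mpow e A (Suc n) = mconv e (-1) (mpow e A n) A"
  unfolding mpow_def by (cases n) auto

theorem proposition3p5:
  fixes K :: "complex set" and e :: int
    and f g :: "int \<Rightarrow> complex" and A B :: "int \<Rightarrow> int \<Rightarrow> complex"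
  assumes K: "is_subfield K"
    and e: "e \<ge> 2"
    and AK: "\<forall>i\<in>{0..<e}. \<forall>j\<in>{0..<e}. A i j \<in> K"
    and BK: "\<forall>i\<in>{0..<e}. \<forall>j\<in>{0..<e}. B i j \<in> K"
    and hf: "\<forall>i\<in>{0..<e}. \<forall>j\<in>{0..<e}.
               f i * f j = (\<Sum>k\<in>{0..<e}. A ((j - i) mod e) ((k - i) mod e) * f k)"
    and hg: "\<forall>i\<in>{0..<e}. \<forall>j\<in>{0..<e}.
               g i * g j = (\<Sum>k\<in>{0..<e}. B ((j - i) mod e) ((k - i) mod e) * g k)"
  shows "(\<forall>d\<in>{1..<e}. \<forall>i\<in>{0..<e}. \<forall>j\<in>{0..<e}.
            dconv e d f g i * dconv e d f g j =
            (\<Sum>k\<in>{0..<e}. mconv e d A B ((j - i) mod e) ((k - i) mod e) * dconv e d f g k))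
       \<and> (\<forall>n::nat. n \<ge> 1 \<longrightarrow> (\<forall>i\<in>{0..<e}. \<forall>j\<in>{0..<e}.
            fpow e f n i * fpow e f n j =
            (\<Sum>k\<in>{0..<e}. mpow e A n ((j - i) mod e) ((k - i) mod e) * fpow e f n k)))"
proof
  have e0: "e > 0" using e by simp
  show "\<forall>d\<in>{1..<e}. \<forall>i\<in>{0..<e}. \<forall>j\<in>{0..<e}.
            dconv e d f g i * dconv e d f g j =
            (\<Sum>k\<in>{0..<e}. mconv e d A B ((j - i) mod e) ((k - i) mod e) * dconv e d f g k)"
    using main[OF e0 hf hg] by blast
  show "\<forall>n::nat. n \<ge> 1 \<longrightarrow> (\<forall>i\<in>{0..<e}. \<forall>j\<in>{0..<e}.
            fpow e f n i * fpow e f n j =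
            (\<Sum>k\<in>{0..<e}. mpow e A n ((j - i) mod e) ((k - i) mod e) * fpow e f n k))"
  proof (intro allI impI)
    fix n :: nat assume "n \<ge> 1"
    then show "\<forall>i\<in>{0..<e}. \<forall>j\<in>{0..<e}.
            fpow e f n i * fpow e f n j =
            (\<Sum>k\<in>{0..<e}. mpow e A n ((j - i) mod e) ((k - i) mod e) * fpow e f n k)"
    proof (induction n rule: nat_induct_at_least)
      case base
      show ?case using hf by (simp add: fpow_def mpow_def)
    next
      case (Suc n)
      show ?case using main[OF e0 Suc.IH hf, where d = "-1"] fpow_Suc[OF Suc.hyps] mpow_Suc[OF Suc.hyps]
        by simp
    qed
  qed
qed

end
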